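(* For every $\lambda>0$ there exists $\delta_1=\delta_1(\lambda)>0$ such that for all $r>0$ and all $x,y\in\mathbb{R}^d$ with $r\leq\|x-y\|\leq\lambda r$, there is a point $z\in\operatorname{conv}(\{x,y\})$ such that $B(z,\delta_1 r)\subseteq W(x,y,r)$.
   Context: $B(x,r)=\{y\in\mathbb{R}^d:\|x-y\|<r\}$ is the open Euclidean ball. For $x,y\in\mathbb{R}^d$ and $r>0$, $W(x,y,r):=\{z\in B(y,\|y-x\|): B(z,r)\supseteq B(x,r)\cap B(y,\|y-x\|)\}$. $\operatorname{conv}$ denotes convex hull. *)

theory Defs
  imports "HOL-Analysis.Analysis"
begin

definition W :: "'a::euclidean_space \<Rightarrow> 'a \<Rightarrow> real \<Rightarrow> 'a set" where
  "W x y r = {z \<in> ball y (norm (y - x)). ball x r \<inter> ball y (norm (y - x)) \<subseteq> ball z r}"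

end

theory Submission
  imports Defs
begin

lemma key:
  fixes q d e :: "'a::euclidean_space" and r c dl lam D a :: real
  assumes r: "r > 0" and lam: "lam > 0" and D: "D = norm d" and rD: "r \<le> D" and Dl: "D \<le> lam * r"
    and a: "a = c * r / D" and c: "0 < c" "c \<le> 1/4" "c \<le> 1/(32*lam)"
    and dl: "0 < dl" "dl \<le> c" "dl \<le> c/(16*lam)"
    and q1: "norm q < r" and q2: "norm (q - d) < norm d" and e: "norm e < dl * r"
  shows "norm (q - (a *\<^sub>R d + e)) < r"
proof -
  have Dpos: "D > 0" using r rD by linarith
  have a0: "a > 0" using a c r Dpos by simp
  have nad: "norm (a *\<^sub>R d) = c * r" using a0 a D Dpos c r by simp
  have nv: "norm (a *\<^sub>R d + e) < (c + dl) * r"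
    using norm_triangle_ineq[of "a *\<^sub>R d" e] nad e by (simp add: algebra_simps)
  have cd: "(c + dl) * r \<le> r/2" using c dl r by (simp add: mult_right_mono[of "c+dl" "1/2" r, simplified])
  show ?thesis
  proof (cases "norm q \<le> r/2")
    case True
    have "norm (q - (a *\<^sub>R d + e)) \<le> norm q + norm (a *\<^sub>R d + e)" by (rule norm_triangle_ineq4)
    then show ?thesis using True nv cd by linarith
  next
    case False
    have "norm (q - d)^2 < norm d ^2" using q2 by (simp add: power_strict_mono)
    hence "norm q ^2 < 2 * (q \<bullet> d)"
      by (simp add: power2_norm_eq_inner inner_diff_left inner_diff_right inner_commute)
    hence qd: "q \<bullet> d > norm q ^ 2 / 2" by simp
    have aq: "a * (q \<bullet> d) \<ge> a * (norm q ^2 / 2)" using qd a0 by simp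
    have "norm q ^ 2 \<ge> (r/2)^2" using False r by (simp add: power_mono)
    hence "norm q ^2 / 2 \<ge> r^2/8" by (simp add: power_divide)
    moreover have "a \<ge> c / lam"
    proof -
      have "c / lam = c * r / (lam * r)" using r by simp
      also have "\<dots> \<le> c * r / D" using Dpos Dl c r by (intro divide_left_mono) auto
      finally show ?thesis using a by simp
    qed
    ultimately have "a * (norm q ^2 / 2) \<ge> (c/lam) * (r^2/8)"
      using c lam a0 by (intro mult_mono) auto
    with aq have A: "a * (q \<bullet> d) \<ge> c * r^2 / (8*lam)" by simp
    have "\<bar>q \<bullet> e\<bar> \<le> norm q * norm e" by (rule Cauchy_Schwarz_ineq2)
    also have "\<dots> \<le> r * (dl * r)" using q1 e r by (intro mult_mono) auto
    finally have B: "q \<bullet> e \<ge> - (dl * r^2)" by (simp add: power2_eq_square algebra_simps)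
    have qv: "q \<bullet> (a *\<^sub>R d + e) \<ge> c * r^2 / (8*lam) - dl * r^2"
      using A B by (simp add: inner_add_right)
    have "norm (a *\<^sub>R d + e)^2 \<le> ((c + dl) * r)^2"
      using nv by (intro power_mono) auto
    also have "\<dots> \<le> (2*c*r)^2" using dl c r by (intro power_mono) auto
    also have "\<dots> = 4 * c * c * r^2" by (simp add: power2_eq_square)
    also have "\<dots> \<le> c / (8*lam) * r^2"
    proof -
      have "4 * c \<le> 1 / (8 * lam)" using c lam by (simp add: field_simps)
      hence "4 * c * c \<le> c / (8*lam)" using c
        by (metis mult_right_mono less_imp_le times_divide_eq_left mult_1)
      thus ?thesis by (intro mult_right_mono) auto
    qed
    also have "\<dots> \<le> 2 * (c * r^2 / (8*lam) - dl * r^2)"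
    proof -
      have "dl * r^2 \<le> c/(16*lam) * r^2" using dl by (intro mult_right_mono) auto
      thus ?thesis by (simp add: field_simps)
    qed
    finally have V: "norm (a *\<^sub>R d + e)^2 \<le> 2 * (q \<bullet> (a *\<^sub>R d + e))" using qv by (meson order_trans mult_left_mono zero_le_numeral)
    have "norm (q - (a *\<^sub>R d + e))^2 = norm q ^2 - 2 * (q \<bullet> (a *\<^sub>R d + e)) + norm (a *\<^sub>R d + e)^2"
      by (simp add: power2_norm_eq_inner inner_diff_left inner_diff_right inner_commute)
    also have "\<dots> \<le> norm q ^ 2" using V by linarith
    also have "\<dots> < r^2" using q1 by (simp add: power_strict_mono)
    finally show ?thesis using r by (smt (verit) power_mono norm_ge_zero)
  qed
qed

theorem lemma3p2:
  fixes lam :: real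
  assumes "lam > 0"
  shows "\<exists>\<delta>1>0. \<forall>r>0. \<forall>x y :: 'a::euclidean_space.
           r \<le> norm (x - y) \<and> norm (x - y) \<le> lam * r \<longrightarrow>
           (\<exists>z\<in>convex hull {x, y}. ball z (\<delta>1 * r) \<subseteq> W x y r)"
proof -
  define c where "c = min (1/4) (1/(32*lam))"
  define dl where "dl = min (c/2) (c/(16*lam))"
  have c: "0 < c" "c \<le> 1/4" "c \<le> 1/(32*lam)" using assms by (auto simp: c_def)
  have dl: "0 < dl" "dl \<le> c" "dl \<le> c/(16*lam)" "dl < c" using c assms by (auto simp: dl_def)
  show ?thesis
  proof (intro exI[of _ dl] conjI allI impI)
    show "dl > 0" by (rule dl)
    fix r :: real and x y :: 'a
    assume r: "r > 0" and xy: "r \<le> norm (x - y) \<and> norm (x - y) \<le> lam * r"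
    define d where "d = y - x"
    define D where "D = norm d"
    define a where "a = c * r / D"
    have DD: "norm (x - y) = D" by (simp add: D_def d_def norm_minus_commute)
    have Dpos: "D > 0" using r xy DD by linarith
    have a0: "0 \<le> a" using c r Dpos by (simp add: a_def)
    have a1: "a \<le> 1"
    proof -
      have "c * r \<le> 1 * D" using c r xy DD by (intro mult_mono) auto
      thus ?thesis using Dpos by (simp add: a_def)
    qed
    have nad: "norm (a *\<^sub>R d) = c * r" using a0 Dpos c r by (simp add: a_def D_def)
    let ?z = "x + a *\<^sub>R d"
    have zin: "?z \<in> convex hull {x, y}"
      using a0 a1 unfolding convex_hull_2_alt d_def by blast
    show "\<exists>z\<in>convex hull {x, y}. ball z (dl * r) \<subseteq> W x y r"
    proof (intro bexI[OF _ zin] subsetI)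
      fix w assume "w \<in> ball ?z (dl * r)"
      define e where "e = w - ?z"
      have e: "norm e < dl * r" using \<open>w \<in> ball ?z (dl * r)\<close> by (simp add: e_def dist_norm norm_minus_commute)
      have w: "w = x + (a *\<^sub>R d + e)" by (simp add: e_def)
      have "norm (y - w) = norm ((1 - a) *\<^sub>R d - e)" by (simp add: w d_def algebra_simps)
      also have "\<dots> \<le> norm ((1 - a) *\<^sub>R d) + norm e" by (rule norm_triangle_ineq4)
      also have "norm ((1 - a) *\<^sub>R d) = D - c * r"
      proof -
        have "norm ((1 - a) *\<^sub>R d) = (1 - a) * D" using a1 by (simp add: D_def)
        also have "\<dots> = D - c * r" using Dpos by (simp add: a_def algebra_simps)
        finally show ?thesis .
      qed
      finally have "norm (y - w) < D" using e dl r
        by (smt (verit) mult_strict_right_mono)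
      hence wb: "w \<in> ball y (norm (y - x))" by (simp add: dist_norm D_def d_def)
      have "ball x r \<inter> ball y (norm (y - x)) \<subseteq> ball w r"
      proof
        fix p assume p: "p \<in> ball x r \<inter> ball y (norm (y - x))"
        define q where "q = p - x"
        have q1: "norm q < r" using p by (simp add: q_def dist_norm norm_minus_commute)
        have q2: "norm (q - d) < norm d" using p
          by (simp add: q_def d_def dist_norm norm_minus_commute)
        have "norm (q - (a *\<^sub>R d + e)) < r"
          by (rule key[OF r assms D_def _ _ a_def c dl(1-3) q1 q2 e]) (use xy DD in auto)
        thus "p \<in> ball w r" by (simp add: w q_def dist_norm norm_minus_commute algebra_simps)
      qed
      thus "w \<in> W x y r" using wb by (simp add: W_def)
    qed
  qed
qed

end
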